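(* Consider the chance-constrained network design problem described in the context, with $\alpha\in[0,1]$. For each commodity $k\in K$ define $$\bar d^k=\min_{z\in\{0,1\}^S}\Big\{\sum_{s=1}^S d^k(\omega_s)p_s(1-z_s)\ \Big|\ \sum_{s=1}^S p_sz_s\le\alpha\Big\}.$$ Then for every $y\in\{0,1\}^{|A|}$ satisfying $\sum_{s\in[S]}p_s\mathbf{1}\{SP(y,\omega_s)\text{ is infeasible}\}\le\alpha$ there exist $\bar x^k_{ij}\ge0$ ($k\in K$, $(i,j)\in A^k$) such that $$\sum_{j:(j,i)\in A^k}\bar x^k_{ji}=\sum_{j:(i,j)\in A^k}\bar x^k_{ij}\ \ \forall k\in K,\ i\in N\setminus\{O(k),D(k)\},$$ $$\sum_{k\in K:(i,j)\in A^k}\bar x^k_{ij}\le u_{ij}y_{ij}\ \ \forall (i,j)\in A,\qquad \sum_{j:(j,D(k))\in A^k}\bar x^k_{jD(k)}\ge\bar d^k\ \ \forall k\in K.$$ That is, these constraints (in variables $y$ and $\bar x$) are valid inequalities for the problem.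
   Context: Directed graph $G=(N,A)$; arc $(i,j)$ built at cost $f_{ij}\ge0$ with capacity $u_{ij}\ge0$ when $y_{ij}=1$. Commodities $K$, each with origin $O(k)$ and destination $D(k)$; admissible arcs $A^k=\{(i,j)\in A: j\neq O(k),\ i\neq D(k)\}$. Finitely many scenarios $\omega_s$, $s\in[S]=\{1,\dots,S\}$, with probabilities $p_s>0$, $\sum_s p_s=1$, and demands $d^k(\omega_s)\ge0$. $SP(y,\omega)$ is the system in flows $x^k_{ij}\ge0$ ($k\in K$, $(i,j)\in A^k$): flow conservation $\sum_{j:(j,i)\in A}x^k_{ji}=\sum_{j:(i,j)\in A}x^k_{ij}$ for all $k$ and $i\in N\setminus\{O(k),D(k)\}$ (sums over arcs in $A^k$); joint capacity $\sum_{k:(i,j)\in A^k}x^k_{ij}\le u_{ij}y_{ij}$ for all $(i,j)\in A$; demand $\sum_{j:(j,D(k))\in A^k}x^k_{jD(k)}\ge d^k(\omega)$ for all $k\in K$. The problem is $\min\{f^\top y: y\in\{0,1\}^{|A|},\ \sum_s p_s\mathbf 1\{SP(y,\omega_s)\text{ infeasible}\}\le\alpha\}$. *)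

theory Defs
  imports Complex_Main "HOL-Library.FuncSet"
begin

definition adm_arcs :: "('n \<times> 'n) set \<Rightarrow> ('k \<Rightarrow> 'n) \<Rightarrow> ('k \<Rightarrow> 'n) \<Rightarrow> 'k \<Rightarrow> ('n \<times> 'n) set" where
  "adm_arcs A Or D k = {(i, j) \<in> A. j \<noteq> Or k \<and> i \<noteq> D k}"

definition flow_system :: "'n set \<Rightarrow> ('n \<times> 'n) set \<Rightarrow> 'k set \<Rightarrow> ('k \<Rightarrow> 'n) \<Rightarrow> ('k \<Rightarrow> 'n)
    \<Rightarrow> ('n \<times> 'n \<Rightarrow> real) \<Rightarrow> ('n \<times> 'n \<Rightarrow> real) \<Rightarrow> ('k \<Rightarrow> real)
    \<Rightarrow> ('k \<Rightarrow> 'n \<times> 'n \<Rightarrow> real) \<Rightarrow> bool" where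
  "flow_system N A K Or D u y dem x \<longleftrightarrow>
     (\<forall>k\<in>K. \<forall>e\<in>adm_arcs A Or D k. 0 \<le> x k e) \<and>
     (\<forall>k\<in>K. \<forall>i\<in>N - {Or k, D k}.
        (\<Sum>j\<in>{j. (j, i) \<in> adm_arcs A Or D k}. x k (j, i)) =
        (\<Sum>j\<in>{j. (i, j) \<in> adm_arcs A Or D k}. x k (i, j))) \<and>
     (\<forall>e\<in>A. (\<Sum>k\<in>{k\<in>K. e \<in> adm_arcs A Or D k}. x k e) \<le> u e * y e) \<and>
     (\<forall>k\<in>K. (\<Sum>j\<in>{j. (j, D k) \<in> adm_arcs A Or D k}. x k (j, D k)) \<ge> dem k)"

definition SP_feasible :: "'n set \<Rightarrow> ('n \<times> 'n) set \<Rightarrow> 'k set \<Rightarrow> ('k \<Rightarrow> 'n) \<Rightarrow> ('k \<Rightarrow> 'n)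
    \<Rightarrow> ('n \<times> 'n \<Rightarrow> real) \<Rightarrow> ('n \<times> 'n \<Rightarrow> real) \<Rightarrow> ('k \<Rightarrow> nat \<Rightarrow> real) \<Rightarrow> nat \<Rightarrow> bool" where
  "SP_feasible N A K Or D u y d s \<longleftrightarrow> (\<exists>x. flow_system N A K Or D u y (\<lambda>k. d k s) x)"

definition dbar :: "nat \<Rightarrow> (nat \<Rightarrow> real) \<Rightarrow> ('k \<Rightarrow> nat \<Rightarrow> real) \<Rightarrow> real \<Rightarrow> 'k \<Rightarrow> real" where
  "dbar S p d \<alpha> k = Min {(\<Sum>s\<in>{1..S}. d k s * p s * (1 - z s)) | z.
       z \<in> {1..S} \<rightarrow> {0, 1} \<and> (\<Sum>s\<in>{1..S}. p s * z s) \<le> \<alpha>}"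

end

theory Submission
  imports Defs
begin

lemma dbar_le:
  assumes "z \<in> {1..S} \<rightarrow> {0, 1}" "(\<Sum>s\<in>{1..S}. p s * z s) \<le> \<alpha>"
  shows "dbar S p d \<alpha> k \<le> (\<Sum>s\<in>{1..S}. d k s * p s * (1 - z s))"
proof -
  let ?M = "{(\<Sum>s\<in>{1..S}. d k s * p s * (1 - z s)) | z.
       z \<in> {1..S} \<rightarrow> {0, 1} \<and> (\<Sum>s\<in>{1..S}. p s * z s) \<le> \<alpha>}"
  have sub: "?M \<subseteq> (\<lambda>z. \<Sum>s\<in>{1..S}. d k s * p s * (1 - z s)) ` (PiE {1..S} (\<lambda>_. {0,1::real}))"
  proof
    fix v assume "v \<in> ?M"
    then obtain z where z: "z \<in> {1..S} \<rightarrow> {0, 1}" and v: "v = (\<Sum>s\<in>{1..S}. d k s * p s * (1 - z s))"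
      by blast
    have "restrict z {1..S} \<in> PiE {1..S} (\<lambda>_. {0,1::real})" using z by auto
    moreover have "v = (\<Sum>s\<in>{1..S}. d k s * p s * (1 - restrict z {1..S} s))"
      using v by (auto intro: sum.cong)
    ultimately show "v \<in> (\<lambda>z. \<Sum>s\<in>{1..S}. d k s * p s * (1 - z s)) ` (PiE {1..S} (\<lambda>_. {0,1::real}))"
      by blast
  qed
  have "finite ?M" by (rule finite_subset[OF sub]) (simp add: finite_PiE)
  moreover have "(\<Sum>s\<in>{1..S}. d k s * p s * (1 - z s)) \<in> ?M" using assms by blast
  ultimately show ?thesis unfolding dbar_def by (rule Min_le)
qed

theorem proposition2:
  fixes N :: "'n set" and A :: "('n \<times> 'n) set" and K :: "'k set"
    and Or D :: "'k \<Rightarrow> 'n" and f u y :: "'n \<times> 'n \<Rightarrow> real"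
    and S :: nat and p :: "nat \<Rightarrow> real" and d :: "'k \<Rightarrow> nat \<Rightarrow> real" and \<alpha> :: real
  assumes "finite N" and "finite A" and "A \<subseteq> N \<times> N" and "finite K"
    and "\<forall>k\<in>K. Or k \<in> N \<and> D k \<in> N"
    and "\<forall>e\<in>A. 0 \<le> f e \<and> 0 \<le> u e"
    and "\<forall>s\<in>{1..S}. 0 < p s" and "(\<Sum>s\<in>{1..S}. p s) = 1"
    and "\<forall>k\<in>K. \<forall>s\<in>{1..S}. 0 \<le> d k s"
    and "0 \<le> \<alpha>" and "\<alpha> \<le> 1"
    and "\<forall>e\<in>A. y e \<in> {0, 1}"
    and "(\<Sum>s\<in>{1..S}. p s * (if SP_feasible N A K Or D u y d s then 0 else 1)) \<le> \<alpha>"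
  shows "\<exists>x. flow_system N A K Or D u y (dbar S p d \<alpha>) x"
proof -
  define F where "F = {s\<in>{1..S}. SP_feasible N A K Or D u y d s}"
  define xs where "xs s = (SOME x. flow_system N A K Or D u y (\<lambda>k. d k s) x)" for s
  have fs: "flow_system N A K Or D u y (\<lambda>k. d k s) (xs s)" if "s \<in> F" for s
    using that unfolding F_def SP_feasible_def xs_def by clarsimp (metis someI)
  define xb where "xb k e = (\<Sum>s\<in>F. p s * xs s k e)" for k e
  have pF: "\<forall>s\<in>F. 0 < p s" using assms(7) by (auto simp: F_def)
  have sumF: "(\<Sum>s\<in>F. p s) \<le> 1"
  proof -
    have "(\<Sum>s\<in>F. p s) \<le> (\<Sum>s\<in>{1..S}. p s)"
      by (rule sum_mono2) (use assms(7) in \<open>auto simp: F_def less_imp_le\<close>)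
    thus ?thesis using assms(8) by simp
  qed
  have "flow_system N A K Or D u y (dbar S p d \<alpha>) xb"
    unfolding flow_system_def
  proof (intro conjI ballI)
    fix k e assume "k \<in> K" "e \<in> adm_arcs A Or D k"
    then show "0 \<le> xb k e" unfolding xb_def
    proof (intro sum_nonneg)
      fix s assume "s \<in> F"
      then have "0 \<le> p s" "0 \<le> xs s k e" using fs pF \<open>k \<in> K\<close> \<open>e \<in> adm_arcs A Or D k\<close>
        by (auto simp: flow_system_def less_imp_le)
      then show "0 \<le> p s * xs s k e" by simp
    qed
  next
    fix k i assume k: "k \<in> K" and i: "i \<in> N - {Or k, D k}"
    have "(\<Sum>j\<in>{j. (j, i) \<in> adm_arcs A Or D k}. xb k (j, i))
        = (\<Sum>s\<in>F. p s * (\<Sum>j\<in>{j. (j, i) \<in> adm_arcs A Or D k}. xs s k (j, i)))"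
      unfolding xb_def by (simp add: sum_distrib_left sum.swap[of _ F])
    also have "\<dots> = (\<Sum>s\<in>F. p s * (\<Sum>j\<in>{j. (i, j) \<in> adm_arcs A Or D k}. xs s k (i, j)))"
      using fs k i by (intro sum.cong refl) (auto simp: flow_system_def)
    also have "\<dots> = (\<Sum>j\<in>{j. (i, j) \<in> adm_arcs A Or D k}. xb k (i, j))"
      unfolding xb_def by (simp add: sum_distrib_left sum.swap[of _ F])
    finally show "(\<Sum>j\<in>{j. (j, i) \<in> adm_arcs A Or D k}. xb k (j, i)) =
        (\<Sum>j\<in>{j. (i, j) \<in> adm_arcs A Or D k}. xb k (i, j))" .
  next
    fix e assume e: "e \<in> A"
    have uy: "0 \<le> u e * y e" using e assms(6,12) by auto
    have "(\<Sum>k\<in>{k\<in>K. e \<in> adm_arcs A Or D k}. xb k e)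
        = (\<Sum>s\<in>F. p s * (\<Sum>k\<in>{k\<in>K. e \<in> adm_arcs A Or D k}. xs s k e))"
      unfolding xb_def by (simp add: sum_distrib_left sum.swap[of _ F])
    also have "\<dots> \<le> (\<Sum>s\<in>F. p s * (u e * y e))"
      using fs e pF by (intro sum_mono mult_left_mono) (auto simp: flow_system_def less_imp_le)
    also have "\<dots> = (\<Sum>s\<in>F. p s) * (u e * y e)" by (simp add: sum_distrib_right)
    also have "\<dots> \<le> u e * y e" using mult_right_mono[OF sumF uy] by simp
    finally show "(\<Sum>k\<in>{k\<in>K. e \<in> adm_arcs A Or D k}. xb k e) \<le> u e * y e" .
  next
    fix k assume k: "k \<in> K"
    define z where "z s = (if SP_feasible N A K Or D u y d s then 0 else 1::real)" for s
    have "dbar S p d \<alpha> k \<le> (\<Sum>s\<in>{1..S}. d k s * p s * (1 - z s))"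
      by (rule dbar_le) (use assms(13) in \<open>auto simp: z_def\<close>)
    also have "\<dots> = (\<Sum>s\<in>F. p s * d k s)"
    proof -
      have "(\<Sum>s\<in>{1..S}. d k s * p s * (1 - z s)) = (\<Sum>s\<in>{1..S}. if s \<in> F then p s * d k s else 0)"
        by (intro sum.cong) (auto simp: z_def F_def)
      also have "\<dots> = (\<Sum>s\<in>F. p s * d k s)"
        by (subst sum.If_cases) (auto simp: F_def Int_absorb1 intro: arg_cong2[where f=sum])
      finally show ?thesis .
    qed
    also have "\<dots> \<le> (\<Sum>s\<in>F. p s * (\<Sum>j\<in>{j. (j, D k) \<in> adm_arcs A Or D k}. xs s k (j, D k)))"
      using fs k pF by (intro sum_mono mult_left_mono) (auto simp: flow_system_def less_imp_le)
    also have "\<dots> = (\<Sum>j\<in>{j. (j, D k) \<in> adm_arcs A Or D k}. xb k (j, D k))"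
      unfolding xb_def by (simp add: sum_distrib_left sum.swap[of _ F])
    finally show "(\<Sum>j\<in>{j. (j, D k) \<in> adm_arcs A Or D k}. xb k (j, D k)) \<ge> dbar S p d \<alpha> k" .
  qed
  thus ?thesis by blast
qed

end
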